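(* Let $A$ be a commutative ring with $1$ and $M\in\operatorname{Sym}_n(A)$. Then $\Sigma(M)$ is an $A$-submodule of $A^n$.
   Context: $\Sigma A^2$ denotes the set of finite sums of squares of elements of $A$. A matrix $N\in\operatorname{Sym}_n(A)$ is a sum of squares if $N=Q^{t}Q$ for some $Q\in\operatorname{Mat}_{m,n}(A)$ and some $m$, equivalently $N=\sum_{i=1}^m w_iw_i^{t}$ for column vectors $w_i\in A^n$. For $M\in\operatorname{Sym}_n(A)$, $\Sigma(M)$ is the set of column vectors $v\in A^n$ such that $sM=vv^{t}+N$ for some $s\in\Sigma A^2$ and some $N\in\operatorname{Sym}_n(A)$ which is a sum of squares. *)

theory Defs
  imports "HOL-Analysis.Analysis"
begin

definition sum_squares :: "'a::comm_ring_1 set" where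
  "sum_squares = {s. \<exists>(m::nat) (a::nat \<Rightarrow> 'a). s = (\<Sum>k<m. (a k)^2)}"

definition is_sym :: "'a ^ 'n ^ 'n \<Rightarrow> bool" where
  "is_sym M \<longleftrightarrow> (\<forall>i j. M $ i $ j = M $ j $ i)"

definition outer :: "'a::times ^ 'n \<Rightarrow> 'a ^ 'n \<Rightarrow> 'a ^ 'n ^ 'n" where
  "outer v w = (\<chi> i j. v $ i * w $ j)"

text \<open>N is a sum of squares: N = Q^t Q = sum of w_i w_i^t.\<close>
definition is_sos_matrix :: "'a::comm_ring_1 ^ 'n ^ 'n \<Rightarrow> bool" where
  "is_sos_matrix N \<longleftrightarrow> is_sym N \<and>
     (\<exists>(m::nat) (w::nat \<Rightarrow> 'a ^ 'n). N = (\<Sum>k<m. outer (w k) (w k)))"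

definition Sigma_set :: "'a::comm_ring_1 ^ 'n ^ 'n \<Rightarrow> ('a ^ 'n) set" where
  "Sigma_set M = {v. \<exists>s N. s \<in> sum_squares \<and> is_sos_matrix N \<and>
       (\<chi> i j. s * M $ i $ j) = outer v v + N}"

end

theory Submission
  imports Defs
begin

lemma sum_lessThan_add: "(\<Sum>k<a+b. f k) = (\<Sum>k<a. f k) + (\<Sum>k<b. f (a+k))"
  for f :: "nat \<Rightarrow> 'b::comm_monoid_add"
  by (induction b) (simp_all add: add.assoc)

lemma module_vec: "module ((*s) :: 'a::comm_ring_1 \<Rightarrow> 'a ^ 'n \<Rightarrow> 'a ^ 'n)"
  by unfold_locales (simp_all add: vec_eq_iff vector_scalar_mult_def algebra_simps)

lemma ss_zero: "0 \<in> sum_squares"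
  unfolding sum_squares_def by (rule CollectI, rule exI[of _ 0]) simp

lemma ss_add: "s \<in> sum_squares \<Longrightarrow> t \<in> sum_squares \<Longrightarrow> s + t \<in> sum_squares"
proof -
  assume "s \<in> sum_squares" "t \<in> sum_squares"
  then obtain m n :: nat and a b where s: "s = (\<Sum>k<m. (a k)^2)" and t: "t = (\<Sum>k<n. (b k)^2)"
    unfolding sum_squares_def by blast
  define c where "c k = (if k < m then a k else b (k - m))" for k
  have "(\<Sum>k<m+n. (c k)^2) = s + t"
    unfolding sum_lessThan_add s t c_def by simp
  then show ?thesis unfolding sum_squares_def
    by (rule_tac CollectI, rule_tac exI[of _ "m+n"], rule_tac exI[of _ c], rule sym)
qed

lemma ss_sq: "c^2 * s \<in> sum_squares" if "s \<in> sum_squares" for c :: "'a::comm_ring_1"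
proof -
  from that obtain m :: nat and a where s: "s = (\<Sum>k<m. (a k)^2)"
    unfolding sum_squares_def by blast
  have "c^2 * s = (\<Sum>k<m. (c * a k)^2)"
    unfolding s by (simp add: sum_distrib_left power_mult_distrib)
  then show ?thesis unfolding sum_squares_def
    by (rule_tac CollectI, rule_tac exI[of _ m], rule_tac exI[of _ "\<lambda>k. c * a k"])
qed

definition sosm :: "'a::comm_ring_1 ^ 'n ^ 'n \<Rightarrow> bool" where
  "sosm N \<longleftrightarrow> (\<exists>(m::nat) (w::nat \<Rightarrow> 'a ^ 'n). N = (\<Sum>k<m. outer (w k) (w k)))"

lemma sosm_iff: "is_sos_matrix N \<longleftrightarrow> sosm N"
proof
  assume "sosm N"
  then obtain m :: nat and w where N: "N = (\<Sum>k<m. outer (w k) (w k))" unfolding sosm_def by blast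
  have "is_sym N" unfolding is_sym_def N
    by (simp add: sum_component outer_def mult.commute)
  with N show "is_sos_matrix N" unfolding is_sos_matrix_def by blast
qed (auto simp: is_sos_matrix_def sosm_def)

lemma sosm_zero: "sosm 0"
  unfolding sosm_def by (rule exI[of _ 0]) simp

lemma sosm_outer: "sosm (outer w w)"
  unfolding sosm_def by (rule exI[of _ 1], rule exI[of _ "\<lambda>_. w"]) simp

lemma sosm_add: "sosm N \<Longrightarrow> sosm P \<Longrightarrow> sosm (N + P)"
proof -
  assume "sosm N" "sosm P"
  then obtain m n :: nat and a b where s: "N = (\<Sum>k<m. outer (a k) (a k))" and t: "P = (\<Sum>k<n. outer (b k) (b k))"
    unfolding sosm_def by blast
  define c where "c k = (if k < m then a k else b (k - m))" for k
  have "(\<Sum>k<m+n. outer (c k) (c k)) = N + P"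
    unfolding sum_lessThan_add s t c_def by simp
  then show ?thesis unfolding sosm_def
    by (rule_tac exI[of _ "m+n"], rule_tac exI[of _ c], rule sym)
qed

lemma outer_scale: "outer (c *s v) (c *s v) = (\<chi> i j. c^2 * outer v v $ i $ j)"
  for c :: "'a::comm_ring_1"
  unfolding outer_def vec_eq_iff vector_scalar_mult_def power2_eq_square by (simp add: ac_simps)

lemma sosm_sq: "sosm N \<Longrightarrow> sosm (\<chi> i j. c^2 * N $ i $ j)"
proof -
  assume "sosm N"
  then obtain m :: nat and a where s: "N = (\<Sum>k<m. outer (a k) (a k))" unfolding sosm_def by blast
  have "(\<chi> i j. c^2 * N $ i $ j) = (\<Sum>k<m. outer (c *s a k) (c *s a k))"
    unfolding s outer_scale by (simp add: vec_eq_iff sum_distrib_left)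
  then show ?thesis unfolding sosm_def
    by (rule_tac exI[of _ m], rule_tac exI[of _ "\<lambda>k. c *s a k"])
qed

lemma scale_step: fixes M N :: "'a::comm_ring_1 ^ 'n ^ 'n"
 assumes hh: "\<And>i j. (c^2 * s) * M $ i $ j = c^2 * outer x x $ i $ j + c^2 * N $ i $ j"
 shows "(\<chi> i j. (c^2 * s) * M $ i $ j) = outer (c *s x) (c *s x) + (\<chi> i j. c^2 * N $ i $ j)"
  unfolding outer_scale
  apply (simp only: vec_eq_iff vector_add_component vec_lambda_beta)
  using hh by simp

lemma Sigma_eq: "x \<in> Sigma_set M \<longleftrightarrow> (\<exists>s N. s \<in> sum_squares \<and> sosm N \<and> (\<chi> i j. s * M $ i $ j) = outer x x + N)"
  unfolding Sigma_set_def sosm_iff by simp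

lemma Sigma_I: "s \<in> sum_squares \<Longrightarrow> sosm N \<Longrightarrow> (\<chi> i j. s * M $ i $ j) = outer x x + N \<Longrightarrow> x \<in> Sigma_set M"
  unfolding Sigma_eq by blast

lemma Sigma_zero: "0 \<in> Sigma_set M"
  by (rule Sigma_I[OF ss_zero sosm_zero]) (simp add: vec_eq_iff outer_def)

lemma Sigma_scale:
  fixes M :: "'a::comm_ring_1 ^ 'n ^ 'n"
  assumes "x \<in> Sigma_set M"
  shows "c *s x \<in> Sigma_set M"
proof -
  from assms obtain s N where s: "s \<in> sum_squares" and N: "sosm N"
    and e: "(\<chi> i j. s * M $ i $ j) = outer x x + N"
    unfolding Sigma_eq by blast
  have h: "\<And>i j. s * M $ i $ j = outer x x $ i $ j + N $ i $ j"
    using e by (simp add: vec_eq_iff)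
  have hh: "(c^2 * s) * M $ i $ j = c^2 * outer x x $ i $ j + c^2 * N $ i $ j" for i j
  proof -
    have "(c^2 * s) * M $ i $ j = c^2 * (s * M $ i $ j)" by (rule mult.assoc)
    also have "\<dots> = c^2 * (outer x x $ i $ j + N $ i $ j)" by (simp only: h)
    also have "\<dots> = c^2 * outer x x $ i $ j + c^2 * N $ i $ j" by (rule distrib_left)
    finally show ?thesis .
  qed
  show ?thesis
    by (rule Sigma_I[OF ss_sq[OF s] sosm_sq[OF N] scale_step[OF hh]])
qed

lemma X: fixes N P :: "'a::comm_ring_1 ^ 'n ^ 'n" and x y :: "'a ^ 'n"
  shows "(outer x x $ i $ j + N $ i $ j) + (outer x x $ i $ j + N $ i $ j) + ((outer y y $ i $ j + P $ i $ j) + (outer y y $ i $ j + P $ i $ j))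
   = outer (x + y) (x + y) $ i $ j + (outer (x - y) (x - y) + (N + N) + (P + P)) $ i $ j"
  unfolding outer_def vector_add_component vector_minus_component vec_lambda_beta
  by (simp add: algebra_simps)

lemma mat_eq: fixes M B C :: "'a::comm_ring_1 ^ 'n ^ 'n"
  assumes "\<And>i j. a * M $ i $ j = B $ i $ j + C $ i $ j"
  shows "(\<chi> i j. a * M $ i $ j) = B + C"
  using assms by (simp add: vec_eq_iff)

lemma Sigma_add:
  fixes M :: "'a::comm_ring_1 ^ 'n ^ 'n"
  assumes "x \<in> Sigma_set M" "y \<in> Sigma_set M"
  shows "x + y \<in> Sigma_set M"
proof -
  from assms obtain s N t P where s: "s \<in> sum_squares" and N: "sosm N"
    and e: "(\<chi> i j. s * M $ i $ j) = outer x x + N"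
    and t: "t \<in> sum_squares" and P: "sosm P"
    and f: "(\<chi> i j. t * M $ i $ j) = outer y y + P"
    unfolding Sigma_eq by blast
  have e': "\<And>i j. s * M $ i $ j = outer x x $ i $ j + N $ i $ j"
    using e by (simp add: vec_eq_iff)
  have f': "\<And>i j. t * M $ i $ j = outer y y $ i $ j + P $ i $ j"
    using f by (simp add: vec_eq_iff)
  let ?s = "s + s + (t + t)"
  let ?N = "outer (x - y) (x - y) + (N + N) + (P + P)"
  have hh: "?s * M $ i $ j = outer (x + y) (x + y) $ i $ j + ?N $ i $ j" for i j
  proof -
    have "?s * M $ i $ j = (s * M $ i $ j) + (s * M $ i $ j) + ((t * M $ i $ j) + (t * M $ i $ j))"
      by (simp only: distrib_right)
    also have "\<dots> = outer (x + y) (x + y) $ i $ j + ?N $ i $ j"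
      unfolding e' f' by (rule X)
    finally show ?thesis .
  qed
  have eq: "(\<chi> i j. ?s * M $ i $ j) = outer (x + y) (x + y) + ?N"
    by (rule mat_eq[OF hh])
  show ?thesis
    by (rule Sigma_I[OF ss_add[OF ss_add[OF s s] ss_add[OF t t]]
          sosm_add[OF sosm_add[OF sosm_outer sosm_add[OF N N]] sosm_add[OF P P]] eq])
qed

theorem lemma3p7:
  fixes M :: "'a::comm_ring_1 ^ 'n ^ 'n"
  assumes "is_sym M"
  shows "module.subspace ((*s) :: 'a \<Rightarrow> 'a ^ 'n \<Rightarrow> 'a ^ 'n) (Sigma_set M)"
  by (rule module.subspaceI[OF module_vec Sigma_zero Sigma_add Sigma_scale])

end
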